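(* Let $d$ be a positive integer. Every $312$-avoiding affine permutation in $\widetilde{\mathfrak S}_d$ has a cut point.
   Context: An affine permutation $\pi\in\widetilde{\mathfrak S}_d$ is a bijection $\pi:\mathbb Z\to\mathbb Z$ such that $\pi(i+d)=\pi(i)+d$ for all $i\in\mathbb Z$ and $\sum_{i=0}^{d-1}(\pi(i)-i)=0$. It is $312$-avoiding if there are no integers $i<j<k$ with $\pi(j)<\pi(k)<\pi(i)$. A cut point of $\pi$ is an integer $j$ such that $\pi(i)<\pi(k)$ for all integers $i\le j<k$. *)

theory Defs
  imports Main
begin

definition affine_perm :: "nat \<Rightarrow> (int \<Rightarrow> int) \<Rightarrow> bool" where
  "affine_perm d \<pi> \<longleftrightarrow> bij \<pi> \<and> (\<forall>i. \<pi> (i + int d) = \<pi> i + int d)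
     \<and> (\<Sum>i\<in>{0..<int d}. \<pi> i - i) = 0"

definition avoids_312 :: "(int \<Rightarrow> int) \<Rightarrow> bool" where
  "avoids_312 \<pi> \<longleftrightarrow> \<not> (\<exists>i j k. i < j \<and> j < k \<and> \<pi> j < \<pi> k \<and> \<pi> k < \<pi> i)"

definition cut_point :: "(int \<Rightarrow> int) \<Rightarrow> int \<Rightarrow> bool" where
  "cut_point \<pi> j \<longleftrightarrow> (\<forall>i k. i \<le> j \<and> j < k \<longrightarrow> \<pi> i < \<pi> k)"

end

theory Submission
  imports Defs
begin

theorem corollary4p3:
  fixes d :: nat and \<pi> :: "int \<Rightarrow> int"
  assumes "d \<ge> 1" and "affine_perm d \<pi>" and "avoids_312 \<pi>"
  shows "\<exists>j. cut_point \<pi> j"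
proof -
  have per: "\<And>i. \<pi> (i + int d) = \<pi> i + int d" and inj: "inj \<pi>"
    using assms(2) unfolding affine_perm_def bij_def by auto
  define L where "L = Min (\<pi> ` {1..int d})"
  have Lle: "\<And>k. 1 \<le> k \<Longrightarrow> k \<le> int d \<Longrightarrow> L \<le> \<pi> k"
    unfolding L_def by (rule Min_le) auto
  have bnd: "\<forall>k. 1 \<le> k \<and> k \<le> int n \<longrightarrow> L \<le> \<pi> k" for n :: nat
  proof (induction n)
    case 0 then show ?case by auto
  next
    case (Suc n)
    show ?case
    proof (intro allI impI)
      fix k assume k: "1 \<le> k \<and> k \<le> int (Suc n)"
      show "L \<le> \<pi> k"
      proof (cases "k \<le> int d")
        case True then show ?thesis using Lle k by auto
      next
        case False
        then have "1 \<le> k - int d \<and> k - int d \<le> int n" using k assms(1) by auto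
        then have "L \<le> \<pi> (k - int d)" using Suc.IH by auto
        moreover have "\<pi> k = \<pi> (k - int d) + int d" using per[of "k - int d"] by simp
        ultimately show ?thesis by simp
      qed
    qed
  qed
  have lb: "\<And>k. 1 \<le> k \<Longrightarrow> L \<le> \<pi> k"
  proof -
    fix k :: int assume "1 \<le> k"
    then show "L \<le> \<pi> k" using bnd[of "nat k"] by auto
  qed
  define P where "P = (\<lambda>n::nat. \<exists>k\<ge>1. \<pi> k - L = int n)"
  have "P (nat (\<pi> 1 - L))" unfolding P_def using lb[of 1] by (intro exI[of _ 1]) auto
  then have "P (Least P)" by (rule LeastI)
  then obtain b where b: "b \<ge> 1" "\<pi> b - L = int (Least P)" unfolding P_def by auto
  have bmin: "\<pi> b \<le> \<pi> k" if "k \<ge> 1" for k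
  proof -
    have "P (nat (\<pi> k - L))" unfolding P_def using lb[OF that] that by (intro exI[of _ k]) auto
    then have "Least P \<le> nat (\<pi> k - L)" by (rule Least_le)
    then show ?thesis using b lb[OF that] by linarith
  qed
  have "cut_point \<pi> b"
    unfolding cut_point_def
  proof (intro allI impI)
    fix i k assume ik: "i \<le> b \<and> b < k"
    have "\<pi> b \<noteq> \<pi> k" using inj ik by (metis inj_eq less_irrefl)
    then have bk: "\<pi> b < \<pi> k" using bmin[of k] ik b by linarith
    show "\<pi> i < \<pi> k"
    proof (rule ccontr)
      assume "\<not> \<pi> i < \<pi> k"
      moreover have "\<pi> i \<noteq> \<pi> k" using inj ik by (metis inj_eq less_irrefl order.strict_trans2)
      ultimately have ik2: "\<pi> k < \<pi> i" by linarith
      show False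
      proof (cases "i = b")
        case True then show False using bk ik2 by simp
      next
        case False
        then have "i < b" using ik by simp
        then show False using assms(3) ik bk ik2 unfolding avoids_312_def by blast
      qed
    qed
  qed
  then show ?thesis by blast
qed

end
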